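(* Let $A$ be a connectivity class of external positions, all of whose positions $p$ have $|B(p)|=m$ and sorted characteristics $j_1\le\dots\le j_{n-m}$. For $S\subseteq\{1,\dots,n\}$ with $|S|=m$ and $\varepsilon:S\to\{0,k-1\}$ put $Cl(S,\varepsilon)=\{p\in A: B(p)=S,\ p_s=\varepsilon(s)\ \forall s\in S\}$. Then $A$ is the disjoint union of the sets $Cl(S,\varepsilon)$; in the solved coloring, the cubies in two positions of $A$ have the same coloring if and only if the positions lie in the same set $Cl(S,\varepsilon)$. Moreover, if $A$ is not central, every nonempty $Cl(S,\varepsilon)$ contains at least two positions (so is a cluster), while if $A$ is central every nonempty $Cl(S,\varepsilon)$ consists of a single position.
   Context: Fix integers $k\ge 2$, $n\ge 3$, $M=\{0,\dots,k-1\}$. Positions are $p\in M^n$, the cubie at $p$ being $\prod_i[p_i,p_i+1]\subset[0,k]^n$; $B(p)=\{i:p_i\in\{0,k-1\}\}$, $p$ external if $B(p)\ne\emptyset$. For $x\in\{1,\dots,k-2\}$, $\bar x=\min(x,k-1-x)$; the characteristics of $p$ are the values $\bar p_i$, $i\notin B(p)$, sorted non-decreasingly. For distinct $i,j$, $\psi_{i,j}:M^n\to M^n$ is $(\psi_{i,j}p)_i=k-1-p_j$, $(\psi_{i,j}p)_j=p_i$, other coordinates unchanged. A move is given by distinct $i,j$ and constants $c_l\in M$ ($l\notin\{i,j\}$) and applies $\psi_{i,j}$ to all positions $p$ with $p_l=c_l$ ($l\notin\{i,j\}$), fixing the others; a combination is a finite sequence of moves. Connectivity classes are the orbits of external positions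 under combinations (all positions in one class have the same $|B(p)|$ and the same characteristics). A class is central if all its characteristics equal $(k-1)/2$ (vacuously true when $m=n$). Solved coloring: for each $t$ with $2\le t\le n-1$, each $t$-dimensional face $\{x\in[0,k]^n: x_s=e_s\ (s\in S)\}$ ($|S|=n-t$, $e_s\in\{0,k\}$) of the big cube gets its own color, distinct faces getting distinct colors, and each $t$-dimensional face of a cubie contained in a $t$-face of the big cube receives that face's color. Two cubies have the same coloring if the sets of colors on them coincide. A cluster is the set of all cubies of one class having the same coloring, provided it has more than one element. *)

theory Defs
  imports Complex_Main
begin

text \<open>Coordinates are indexed by 0..n-1. A position is a function p :: nat => nat with
  p i < k for i < n and p i = 0 for i >= n (canonical representation of M^n).\<close>

definition positions :: "nat \<Rightarrow> nat \<Rightarrow> (nat \<Rightarrow> nat) set" where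
  "positions k n = {p. (\<forall>i<n. p i < k) \<and> (\<forall>i\<ge>n. p i = 0)}"

definition B :: "nat \<Rightarrow> nat \<Rightarrow> (nat \<Rightarrow> nat) \<Rightarrow> nat set" where
  "B k n p = {i. i < n \<and> (p i = 0 \<or> p i = k - 1)}"

definition external :: "nat \<Rightarrow> nat \<Rightarrow> (nat \<Rightarrow> nat) \<Rightarrow> bool" where
  "external k n p \<longleftrightarrow> B k n p \<noteq> {}"

definition bar :: "nat \<Rightarrow> nat \<Rightarrow> nat" where
  "bar k x = min x (k - 1 - x)"

definition characteristics :: "nat \<Rightarrow> nat \<Rightarrow> (nat \<Rightarrow> nat) \<Rightarrow> nat list" where
  "characteristics k n p = sort (map (\<lambda>i. bar k (p i)) (filter (\<lambda>i. i \<notin> B k n p) [0..<n]))"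

definition psi :: "nat \<Rightarrow> nat \<Rightarrow> nat \<Rightarrow> (nat \<Rightarrow> nat) \<Rightarrow> (nat \<Rightarrow> nat)" where
  "psi k i j p = p(i := k - 1 - p j, j := p i)"

text \<open>A move is a triple (i, j, c): distinct axes i, j and constants c l in M for l not in {i,j}.\<close>
type_synonym move = "nat \<times> nat \<times> (nat \<Rightarrow> nat)"

definition valid_move :: "nat \<Rightarrow> nat \<Rightarrow> move \<Rightarrow> bool" where
  "valid_move k n mv = (case mv of (i, j, c) \<Rightarrow>
     i < n \<and> j < n \<and> i \<noteq> j \<and> (\<forall>l<n. l \<notin> {i, j} \<longrightarrow> c l < k))"

definition apply_move :: "nat \<Rightarrow> nat \<Rightarrow> move \<Rightarrow> (nat \<Rightarrow> nat) \<Rightarrow> (nat \<Rightarrow> nat)" where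
  "apply_move k n mv p = (case mv of (i, j, c) \<Rightarrow>
     if (\<forall>l<n. l \<notin> {i, j} \<longrightarrow> p l = c l) then psi k i j p else p)"

definition apply_comb :: "nat \<Rightarrow> nat \<Rightarrow> move list \<Rightarrow> (nat \<Rightarrow> nat) \<Rightarrow> (nat \<Rightarrow> nat)" where
  "apply_comb k n ms p = foldl (\<lambda>q mv. apply_move k n mv q) p ms"

definition orbit :: "nat \<Rightarrow> nat \<Rightarrow> (nat \<Rightarrow> nat) \<Rightarrow> (nat \<Rightarrow> nat) set" where
  "orbit k n p = {apply_comb k n ms p | ms. \<forall>mv \<in> set ms. valid_move k n mv}"

definition conn_classes :: "nat \<Rightarrow> nat \<Rightarrow> (nat \<Rightarrow> nat) set set" where
  "conn_classes k n = {orbit k n p | p. p \<in> positions k n \<and> external k n p}"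

definition central :: "nat \<Rightarrow> nat \<Rightarrow> (nat \<Rightarrow> nat) set \<Rightarrow> bool" where
  "central k n A \<longleftrightarrow> (\<forall>p\<in>A. \<forall>x \<in> set (characteristics k n p). real x = (real k - 1) / 2)"

text \<open>Points of R^n are functions nat => real (only coordinates < n matter).
  A t-face of the big cube [0,k]^n is given by a set S of n - t fixed coordinates with
  values in {0,k}; a t-face of the cubie at p by a set T of n - t fixed coordinates with
  values in {p_s, p_s + 1}. Colors are identified with the faces of the big cube
  themselves (distinct faces get distinct colors).\<close>

definition bigface :: "nat \<Rightarrow> nat \<Rightarrow> nat set \<Rightarrow> (nat \<Rightarrow> real) \<Rightarrow> (nat \<Rightarrow> real) set" where
  "bigface k n S e = {x. (\<forall>i<n. 0 \<le> x i \<and> x i \<le> real k) \<and> (\<forall>s\<in>S. x s = e s)}"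

definition bigfaces :: "nat \<Rightarrow> nat \<Rightarrow> nat \<Rightarrow> (nat \<Rightarrow> real) set set" where
  "bigfaces k n t = {bigface k n S e | S e. S \<subseteq> {0..<n} \<and> card S = n - t \<and>
                        (\<forall>s\<in>S. e s = 0 \<or> e s = real k)}"

definition cubieface :: "nat \<Rightarrow> (nat \<Rightarrow> nat) \<Rightarrow> nat set \<Rightarrow> (nat \<Rightarrow> real) \<Rightarrow> (nat \<Rightarrow> real) set" where
  "cubieface n p T f = {x. (\<forall>i<n. i \<notin> T \<longrightarrow> real (p i) \<le> x i \<and> x i \<le> real (p i) + 1)
                          \<and> (\<forall>s\<in>T. x s = f s)}"

definition cubiefaces :: "nat \<Rightarrow> (nat \<Rightarrow> nat) \<Rightarrow> nat \<Rightarrow> (nat \<Rightarrow> real) set set" where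
  "cubiefaces n p t = {cubieface n p T f | T f. T \<subseteq> {0..<n} \<and> card T = n - t \<and>
                        (\<forall>s\<in>T. f s = real (p s) \<or> f s = real (p s) + 1)}"

definition coloring :: "nat \<Rightarrow> nat \<Rightarrow> (nat \<Rightarrow> nat) \<Rightarrow> (nat \<Rightarrow> real) set set" where
  "coloring k n p = {F. \<exists>t. 2 \<le> t \<and> t \<le> n - 1 \<and> F \<in> bigfaces k n t \<and>
                          (\<exists>G \<in> cubiefaces n p t. G \<subseteq> F)}"

definition Cl :: "nat \<Rightarrow> nat \<Rightarrow> (nat \<Rightarrow> nat) set \<Rightarrow> nat set \<Rightarrow> (nat \<Rightarrow> nat) \<Rightarrow> (nat \<Rightarrow> nat) set" where
  "Cl k n A S \<epsilon> = {p \<in> A. B k n p = S \<and> (\<forall>s\<in>S. p s = \<epsilon> s)}"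

definition admissible :: "nat \<Rightarrow> nat \<Rightarrow> nat \<Rightarrow> nat set \<Rightarrow> (nat \<Rightarrow> nat) \<Rightarrow> bool" where
  "admissible k n m S \<epsilon> \<longleftrightarrow> S \<subseteq> {0..<n} \<and> card S = m \<and> (\<forall>s\<in>S. \<epsilon> s = 0 \<or> \<epsilon> s = k - 1)"

end

theory Submission
  imports Defs
begin


lemma psi_pos:
  assumes "p \<in> positions k n" "i < n" "j < n" "k \<ge> 1"
  shows "psi k i j p \<in> positions k n"
  using assms unfolding positions_def psi_def by auto

lemma move_pos:
  assumes "valid_move k n mv" "p \<in> positions k n" "k \<ge> 1"
  shows "apply_move k n mv p \<in> positions k n"
  using assms psi_pos unfolding valid_move_def apply_move_def by (auto split: prod.splits)

lemma comb_pos: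
  assumes "\<forall>mv\<in>set ms. valid_move k n mv" "p \<in> positions k n" "k \<ge> 1"
  shows "apply_comb k n ms p \<in> positions k n"
  using assms
proof (induction ms arbitrary: p)
  case Nil
  then show ?case by (simp add: apply_comb_def)
next
  case (Cons mv ms)
  have "apply_comb k n (mv # ms) p = apply_comb k n ms (apply_move k n mv p)"
    by (simp add: apply_comb_def)
  then show ?case using Cons move_pos by simp
qed

lemma orbit_pos:
  assumes "p \<in> positions k n" "k \<ge> 1" "q \<in> orbit k n p"
  shows "q \<in> positions k n"
  using assms comb_pos unfolding orbit_def by blast

lemma orbit_self: "p \<in> orbit k n p"
  unfolding orbit_def by (rule CollectI, rule exI[of _ "[]"]) (simp add: apply_comb_def)

lemma orbit_psi:
  assumes "p \<in> positions k n" "k \<ge> 1" "q \<in> orbit k n p" "i < n" "j < n" "i \<noteq> j"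
  shows "psi k i j q \<in> orbit k n p"
proof -
  obtain ms where ms: "q = apply_comb k n ms p" "\<forall>mv\<in>set ms. valid_move k n mv"
    using assms(3) unfolding orbit_def by blast
  have qp: "q \<in> positions k n" using orbit_pos assms by blast
  have v: "valid_move k n (i, j, q)" using qp assms unfolding valid_move_def positions_def by auto
  have "apply_comb k n (ms @ [(i, j, q)]) p = apply_move k n (i, j, q) q"
    using ms by (simp add: apply_comb_def)
  also have "\<dots> = psi k i j q" unfolding apply_move_def by simp
  finally have "psi k i j q = apply_comb k n (ms @ [(i, j, q)]) p" by simp
  moreover have "\<forall>mv\<in>set (ms @ [(i, j, q)]). valid_move k n mv" using ms v by auto
  ultimately show ?thesis unfolding orbit_def by blast
qed

definition Pc :: "nat \<Rightarrow> nat \<Rightarrow> (nat \<Rightarrow> nat) \<Rightarrow> bool" where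
  "Pc k n p = (\<exists>l<n. 0 < p l \<and> p l < k - 1 \<and> 2 * p l \<noteq> k - 1)"

lemma Pc_psi:
  assumes "p \<in> positions k n" "i < n" "j < n" "i \<noteq> j"
  shows "Pc k n (psi k i j p) = Pc k n p"
proof
  assume "Pc k n (psi k i j p)"
  then obtain l where l: "l < n" "0 < psi k i j p l" "psi k i j p l < k - 1" "2 * psi k i j p l \<noteq> k - 1"
    unfolding Pc_def by blast
  have pj: "p j < k" using assms unfolding positions_def by auto
  show "Pc k n p"
  proof (cases "l = i")
    case True
    then show ?thesis using l assms pj unfolding Pc_def psi_def
      by (intro exI[of _ j]) auto
  next
    case False
    show ?thesis
    proof (cases "l = j")
      case True
      then show ?thesis using l assms False unfolding Pc_def psi_def
        by (intro exI[of _ i]) auto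
    next
      case False2: False
      then show ?thesis using l False unfolding Pc_def psi_def by auto
    qed
  qed
next
  assume "Pc k n p"
  then obtain l where l: "l < n" "0 < p l" "p l < k - 1" "2 * p l \<noteq> k - 1"
    unfolding Pc_def by blast
  have pj: "p j < k" using assms unfolding positions_def by auto
  show "Pc k n (psi k i j p)"
  proof (cases "l = i")
    case True
    then show ?thesis using l assms pj unfolding Pc_def psi_def
      by (intro exI[of _ j]) auto
  next
    case False
    show ?thesis
    proof (cases "l = j")
      case True
      then show ?thesis using l assms False unfolding Pc_def psi_def
        by (intro exI[of _ i]) auto
    next
      case False2: False
      then show ?thesis using l False assms unfolding Pc_def psi_def by (intro exI[of _ l]) auto
    qed
  qed
qed

lemma Pc_move:
  assumes "valid_move k n mv" "p \<in> positions k n"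
  shows "Pc k n (apply_move k n mv p) = Pc k n p"
  using assms Pc_psi unfolding valid_move_def apply_move_def by (auto split: prod.splits)

lemma Pc_comb:
  assumes "\<forall>mv\<in>set ms. valid_move k n mv" "p \<in> positions k n" "k \<ge> 1"
  shows "Pc k n (apply_comb k n ms p) = Pc k n p"
  using assms
proof (induction ms arbitrary: p)
  case Nil
  then show ?case by (simp add: apply_comb_def)
next
  case (Cons mv ms)
  have "apply_comb k n (mv # ms) p = apply_comb k n ms (apply_move k n mv p)"
    by (simp add: apply_comb_def)
  then show ?case using Cons move_pos Pc_move by simp
qed

lemma orbit_Pc:
  assumes "p \<in> positions k n" "k \<ge> 1" "q \<in> orbit k n p"
  shows "Pc k n q = Pc k n p"
  using assms Pc_comb unfolding orbit_def by blast

lemma char_set: "set (characteristics k n p) = {bar k (p l) | l. l < n \<and> l \<notin> B k n p}"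
  unfolding characteristics_def by auto

lemma bar_key:
  assumes "x < k"
  shows "(real (bar k x) = (real k - 1) / 2) \<longleftrightarrow> 2 * x = k - 1"
proof -
  have "(real (bar k x) = (real k - 1) / 2) \<longleftrightarrow> real (2 * bar k x) = real (k - 1)"
    using assms by (simp add: of_nat_diff mult.commute)
  also have "\<dots> \<longleftrightarrow> 2 * bar k x = k - 1" by (simp only: of_nat_eq_iff)
  also have "\<dots> \<longleftrightarrow> 2 * x = k - 1" unfolding bar_def using assms by (simp add: min_def, arith)
  finally show ?thesis .
qed

lemma central_iff:
  assumes "A \<subseteq> positions k n"
  shows "central k n A \<longleftrightarrow> (\<forall>p\<in>A. \<not> Pc k n p)"
proof -
  have "central k n A \<longleftrightarrow> (\<forall>p\<in>A. \<forall>l. l < n \<and> l \<notin> B k n p \<longrightarrow> real (bar k (p l)) = (real k - 1) / 2)"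
    unfolding central_def char_set by blast
  also have "\<dots> \<longleftrightarrow> (\<forall>p\<in>A. \<forall>l. l < n \<and> l \<notin> B k n p \<longrightarrow> 2 * p l = k - 1)"
  proof -
    have "\<And>p l. p \<in> A \<Longrightarrow> l < n \<Longrightarrow> p l < k" using assms unfolding positions_def by auto
    then show ?thesis using bar_key by metis
  qed
  also have "\<dots> \<longleftrightarrow> (\<forall>p\<in>A. \<not> Pc k n p)"
  proof -
    have "\<And>p l. p \<in> A \<Longrightarrow> l < n \<Longrightarrow> p l < k" using assms unfolding positions_def by auto
    moreover have "\<And>x. x < k \<Longrightarrow> (\<not> (x = 0 \<or> x = k - 1)) \<longleftrightarrow> (0 < x \<and> x < k - 1)" by arith
    ultimately show ?thesis unfolding Pc_def B_def by (smt (verit) mem_Collect_eq)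
  qed
  finally show ?thesis .
qed



lemma bigface_sub1:
  assumes "real k > 0"
    "\<forall>s\<in>S. e s = 0 \<or> e s = real k" "\<forall>s\<in>S'. e' s = 0 \<or> e' s = real k"
    "bigface k n S e \<subseteq> bigface k n S' e'"
  shows "S' \<subseteq> S"
proof
  fix s assume s: "s \<in> S'"
  show "s \<in> S"
  proof (rule ccontr)
    assume ns: "s \<notin> S"
    define x where "x = (\<lambda>i. if i \<in> S then e i else if i = s then real k - e' s else 0)"
    have "x \<in> bigface k n S e"
      unfolding bigface_def x_def using assms(1,2,3) s by auto
    then have "x \<in> bigface k n S' e'" using assms(4) by blast
    then have "x s = e' s" unfolding bigface_def using s by auto
    then show False unfolding x_def using ns assms(1,3) s by auto
  qed
qed

lemma bigface_sub2:
  assumes "real k > 0"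
    "\<forall>s\<in>S. e s = 0 \<or> e s = real k" "\<forall>s\<in>S'. e' s = 0 \<or> e' s = real k"
    "bigface k n S e \<subseteq> bigface k n S' e'" "s \<in> S'"
  shows "e s = e' s"
proof -
  have sS: "s \<in> S" using bigface_sub1[OF assms(1-4)] assms(5) by blast
  define x where "x = (\<lambda>i. if i \<in> S then e i else 0)"
  have "x \<in> bigface k n S e"
    unfolding bigface_def x_def using assms(1,2) by auto
  then have "x \<in> bigface k n S' e'" using assms(4) by blast
  then have "x s = e' s" unfolding bigface_def using assms(5) by auto
  then show ?thesis using sS unfolding x_def by simp
qed

lemma cubie_big:
  assumes "p \<in> positions k n" "k \<ge> 1" "S \<subseteq> {0..<n}" "T \<subseteq> {0..<n}" "card S = card T"
    "\<forall>s\<in>T. f s = real (p s) \<or> f s = real (p s) + 1"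
    "\<forall>s\<in>S. e s = 0 \<or> e s = real k"
    "cubieface n p T f \<subseteq> bigface k n S e"
  shows "S = T \<and> (\<forall>s\<in>S. (e s = 0 \<and> p s = 0) \<or> (e s = real k \<and> p s = k - 1))"
proof -
  have ST: "S \<subseteq> T"
  proof
    fix s assume s: "s \<in> S"
    show "s \<in> T"
    proof (rule ccontr)
      assume ns: "s \<notin> T"
      have sn: "s < n" using s assms(3) by auto
      define x where "x = (\<lambda>c i. if i \<in> T then f i else if i = s then c else real (p i))"
      have "x (real (p s)) \<in> cubieface n p T f" "x (real (p s) + 1) \<in> cubieface n p T f"
        unfolding cubieface_def x_def by auto
      then have "x (real (p s)) \<in> bigface k n S e" "x (real (p s) + 1) \<in> bigface k n S e"
        using assms(8) by blast+
      then have "x (real (p s)) s = e s" "x (real (p s) + 1) s = e s"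
        unfolding bigface_def using s by auto
      then show False unfolding x_def using ns by simp
    qed
  qed
  have fin: "finite T" using assms(4) finite_subset by blast
  have eq: "S = T" using card_subset_eq[OF fin ST] assms(5) by simp
  have "(e s = 0 \<and> p s = 0) \<or> (e s = real k \<and> p s = k - 1)" if s: "s \<in> S" for s
  proof -
    define x where "x = (\<lambda>i. if i \<in> T then f i else real (p i))"
    have "x \<in> cubieface n p T f" unfolding cubieface_def x_def by auto
    then have "x \<in> bigface k n S e" using assms(8) by blast
    then have "f s = e s" unfolding bigface_def x_def using s eq by auto
    moreover have "p s < k" using assms(1,3) s unfolding positions_def by auto
    moreover have "f s = real (p s) \<or> f s = real (p s) + 1" using assms(6) s eq by auto
    moreover have "e s = 0 \<or> e s = real k" using assms(7) s by auto
    ultimately show ?thesis using assms(2) by (auto simp: of_nat_diff)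
  qed
  then show ?thesis using eq by blast
qed

lemma cubie_big_conv:
  assumes "p \<in> positions k n" "k \<ge> 1"
    "\<forall>s\<in>S. (e s = 0 \<and> p s = 0) \<or> (e s = real k \<and> p s = k - 1)"
  shows "cubieface n p S e \<subseteq> bigface k n S e \<and> (\<forall>s\<in>S. e s = real (p s) \<or> e s = real (p s) + 1)"
proof (intro conjI subsetI ballI)
  fix x assume x: "x \<in> cubieface n p S e"
  have "0 \<le> x i \<and> x i \<le> real k" if i: "i < n" for i
  proof (cases "i \<in> S")
    case True
    then show ?thesis using x assms(3) unfolding cubieface_def by auto
  next
    case False
    have "p i < k" using assms(1) i unfolding positions_def by auto
    then have "real (p i) + 1 \<le> real k" by linarith
    then show ?thesis using x i False unfolding cubieface_def by force
  qed
  then show "x \<in> bigface k n S e" using x unfolding cubieface_def bigface_def by auto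
next
  fix s assume "s \<in> S"
  then show "e s = real (p s) \<or> e s = real (p s) + 1" using assms(2,3) by (auto simp: of_nat_diff)
qed

definition condc :: "nat \<Rightarrow> (nat \<Rightarrow> nat) \<Rightarrow> nat set \<Rightarrow> (nat \<Rightarrow> real) \<Rightarrow> bool" where
  "condc k p S e = (\<forall>s\<in>S. (e s = 0 \<and> p s = 0) \<or> (e s = real k \<and> p s = k - 1))"

lemma coloring_mem:
  assumes "p \<in> positions k n" "k \<ge> 1"
  shows "F \<in> coloring k n p \<longleftrightarrow> (\<exists>t S e. 2 \<le> t \<and> t \<le> n - 1 \<and> S \<subseteq> {0..<n} \<and> card S = n - t
      \<and> (\<forall>s\<in>S. e s = 0 \<or> e s = real k) \<and> F = bigface k n S e \<and> condc k p S e)"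
proof
  assume "F \<in> coloring k n p"
  then obtain t where t: "2 \<le> t" "t \<le> n - 1" "F \<in> bigfaces k n t" "\<exists>G \<in> cubiefaces n p t. G \<subseteq> F"
    unfolding coloring_def by blast
  obtain S e where Se: "F = bigface k n S e" "S \<subseteq> {0..<n}" "card S = n - t" "\<forall>s\<in>S. e s = 0 \<or> e s = real k"
    using t(3) unfolding bigfaces_def by blast
  obtain T f where Tf: "cubieface n p T f \<subseteq> F" "T \<subseteq> {0..<n}" "card T = n - t"
    "\<forall>s\<in>T. f s = real (p s) \<or> f s = real (p s) + 1"
    using t(4) unfolding cubiefaces_def by blast
  have "S = T \<and> condc k p S e"
    using cubie_big[OF assms Se(2) Tf(2) _ Tf(4) Se(4)] Se(1,3) Tf(1,3) unfolding condc_def by simp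
  then show "\<exists>t S e. 2 \<le> t \<and> t \<le> n - 1 \<and> S \<subseteq> {0..<n} \<and> card S = n - t
      \<and> (\<forall>s\<in>S. e s = 0 \<or> e s = real k) \<and> F = bigface k n S e \<and> condc k p S e"
    using t(1,2) Se by blast
next
  assume "\<exists>t S e. 2 \<le> t \<and> t \<le> n - 1 \<and> S \<subseteq> {0..<n} \<and> card S = n - t
      \<and> (\<forall>s\<in>S. e s = 0 \<or> e s = real k) \<and> F = bigface k n S e \<and> condc k p S e"
  then obtain t S e where Se: "2 \<le> t" "t \<le> n - 1" "S \<subseteq> {0..<n}" "card S = n - t"
      "\<forall>s\<in>S. e s = 0 \<or> e s = real k" "F = bigface k n S e" "condc k p S e" by blast
  have c: "cubieface n p S e \<subseteq> bigface k n S e" "\<forall>s\<in>S. e s = real (p s) \<or> e s = real (p s) + 1"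
    using cubie_big_conv[OF assms] Se(7) unfolding condc_def by blast+
  have "F \<in> bigfaces k n t" using Se unfolding bigfaces_def by blast
  moreover have "cubieface n p S e \<in> cubiefaces n p t" using Se(3,4) c(2) unfolding cubiefaces_def by blast
  ultimately show "F \<in> coloring k n p" using Se(1,2,6) c(1) unfolding coloring_def by blast
qed


lemma coloring_half:
  assumes "p \<in> positions k n" "q \<in> positions k n" "k \<ge> 2" "n \<ge> 3"
    "coloring k n p = coloring k n q" "s \<in> B k n p"
  shows "s \<in> B k n q \<and> q s = p s"
proof -
  have k1: "k \<ge> 1" "real k > 0" using assms(3) by auto
  have sn: "s < n" and ps: "p s = 0 \<or> p s = k - 1" using assms(6) unfolding B_def by auto
  define e where "e = (\<lambda>i::nat. if p s = 0 then 0 else real k)"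
  have ce: "condc k p {s} e" unfolding condc_def e_def using ps by auto
  have "bigface k n {s} e \<in> coloring k n p"
  proof -
    have "2 \<le> n - 1 \<and> n - 1 \<le> n - 1 \<and> {s} \<subseteq> {0..<n} \<and> card {s} = n - (n - 1)
      \<and> (\<forall>s'\<in>{s}. e s' = 0 \<or> e s' = real k) \<and> bigface k n {s} e = bigface k n {s} e \<and> condc k p {s} e"
      using assms(4) sn ce by (simp add: e_def, linarith)
    then show ?thesis unfolding coloring_mem[OF assms(1) k1(1)] by blast
  qed
  then have "bigface k n {s} e \<in> coloring k n q" using assms(5) by simp
  then obtain t S' e' where Se: "S' \<subseteq> {0..<n}" "\<forall>s\<in>S'. e' s = 0 \<or> e' s = real k"
    "bigface k n {s} e = bigface k n S' e'" "condc k q S' e'"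
    unfolding coloring_mem[OF assms(2) k1(1)] by blast
  have ee: "\<forall>s\<in>{s}. e s = 0 \<or> e s = real k" unfolding e_def by auto
  have sub1: "bigface k n {s} e \<subseteq> bigface k n S' e'" and sub2: "bigface k n S' e' \<subseteq> bigface k n {s} e"
    using Se(3) by simp_all
  have "S' \<subseteq> {s}" using bigface_sub1[OF k1(2) ee Se(2) sub1] .
  moreover have "{s} \<subseteq> S'" using bigface_sub1[OF k1(2) Se(2) ee sub2] .
  ultimately have S': "S' = {s}" by blast
  have "e s = e' s" using bigface_sub2[OF k1(2) ee Se(2) sub1] S' by simp
  then have "(e s = 0 \<and> q s = 0) \<or> (e s = real k \<and> q s = k - 1)"
    using Se(4) S' unfolding condc_def by auto
  then have qs: "q s = p s"
  proof (cases "p s = 0")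
    case True
    then have "e s = 0" unfolding e_def by simp
    then show ?thesis using \<open>(e s = 0 \<and> q s = 0) \<or> (e s = real k \<and> q s = k - 1)\<close> k1 True by auto
  next
    case False
    then have "e s = real k" "p s = k - 1" using ps unfolding e_def by simp_all
    then show ?thesis using \<open>(e s = 0 \<and> q s = 0) \<or> (e s = real k \<and> q s = k - 1)\<close> k1 by auto
  qed
  have "q s = 0 \<or> q s = k - 1" using qs ps by simp
  then show ?thesis using qs sn unfolding B_def by simp
qed

lemma coloring_eq:
  assumes "p \<in> positions k n" "q \<in> positions k n" "k \<ge> 2" "n \<ge> 3"
  shows "coloring k n p = coloring k n q \<longleftrightarrow> (B k n p = B k n q \<and> (\<forall>s\<in>B k n p. p s = q s))"
proof
  assume c: "coloring k n p = coloring k n q"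
  have 1: "\<forall>s\<in>B k n p. s \<in> B k n q \<and> q s = p s" using coloring_half[OF assms c] by blast
  have 2: "\<forall>s\<in>B k n q. s \<in> B k n p \<and> p s = q s" using coloring_half[OF assms(2,1,3,4) c[symmetric]] by blast
  show "B k n p = B k n q \<and> (\<forall>s\<in>B k n p. p s = q s)" using 1 2 by (metis subsetI subset_antisym)
next
  assume h: "B k n p = B k n q \<and> (\<forall>s\<in>B k n p. p s = q s)"
  have k1: "k \<ge> 1" using assms(3) by auto
  have cc: "condc k p S e \<longleftrightarrow> condc k q S e" if S: "S \<subseteq> {0..<n}" for S e
  proof -
    have "p s = q s" if "s \<in> S" "p s = 0 \<or> p s = k - 1 \<or> q s = 0 \<or> q s = k - 1" for s
    proof -
      have "s < n" using that S by auto
      then have "s \<in> B k n p \<or> s \<in> B k n q" using that unfolding B_def by blast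
      then show ?thesis using h by metis
    qed
    then show ?thesis unfolding condc_def by (intro ball_cong refl) metis
  qed
  show "coloring k n p = coloring k n q"
  proof (rule set_eqI)
    fix F
    show "F \<in> coloring k n p \<longleftrightarrow> F \<in> coloring k n q"
      unfolding coloring_mem[OF assms(1) k1] coloring_mem[OF assms(2) k1] using cc by blast
  qed
qed



lemma exists_other:
  assumes p0: "p0 \<in> positions k n" and k: "k \<ge> 2" and n: "n \<ge> 3"
    and pA: "p \<in> orbit k n p0" and Bne: "B k n p \<noteq> {}" and Pp: "Pc k n p"
  shows "\<exists>q\<in>orbit k n p0. q \<noteq> p \<and> B k n q = B k n p \<and> (\<forall>s\<in>B k n p. q s = p s)"
proof -
  have k1: "k \<ge> 1" using k by simp
  have pp: "p \<in> positions k n" using orbit_pos[OF p0 k1 pA] .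
  then have plt: "\<And>i. i < n \<Longrightarrow> p i < k" unfolding positions_def by auto
  obtain l where l: "l < n" "0 < p l" "p l < k - 1" "2 * p l \<noteq> k - 1" using Pp unfolding Pc_def by blast
  have lB: "l \<notin> B k n p" using l unfolding B_def by auto
  obtain s where s: "s \<in> B k n p" using Bne by blast
  have sn: "s < n" and ps: "p s = 0 \<or> p s = k - 1" using s unfolding B_def by auto
  have sl: "s \<noteq> l" using s lB by blast
  have ql_ne: "k - 1 - p l \<noteq> p l" using l by arith
  have ql_nb: "k - 1 - p l \<noteq> 0 \<and> k - 1 - p l \<noteq> k - 1" using l by arith
  show ?thesis
  proof (cases "\<exists>t<n. t \<noteq> l \<and> t \<notin> B k n p")
    case True
    then obtain t where t: "t < n" "t \<noteq> l" "t \<notin> B k n p" by blast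
    have pt: "p t \<noteq> 0" "p t \<noteq> k - 1" "p t < k" using t plt unfolding B_def by auto
    define q where "q = psi k l t (psi k l t p)"
    have qo: "q \<in> orbit k n p0" unfolding q_def
      using orbit_psi[OF p0 k1 orbit_psi[OF p0 k1 pA l(1) t(1)] l(1) t(1)] t(2) by auto
    have qf: "q = p(l := k - 1 - p l, t := k - 1 - p t)"
      unfolding q_def psi_def using t(2) by (auto simp: fun_eq_iff)
    have "q \<noteq> p" using qf ql_ne t(2) by (metis fun_upd_other fun_upd_same)
    moreover have "B k n q = B k n p"
    proof -
      have "k - 1 - p t \<noteq> 0 \<and> k - 1 - p t \<noteq> k - 1" using pt by arith
      then show ?thesis unfolding B_def qf using ql_nb pt l t(2) lB t(3) unfolding B_def by auto
    qed
    moreover have "\<forall>s\<in>B k n p. q s = p s" using qf lB t(3) by auto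
    ultimately show ?thesis using qo by blast
  next
    case False
    then have allB: "\<And>t. t < n \<Longrightarrow> t \<noteq> l \<Longrightarrow> t \<in> B k n p" by blast
    obtain t where t: "t < n" "t \<noteq> l" "t \<noteq> s"
    proof -
      have "\<exists>t\<in>{0,1,2::nat}. t \<noteq> l \<and> t \<noteq> s" by auto
      then obtain t where "t \<in> {0,1,2::nat}" "t \<noteq> l" "t \<noteq> s" by blast
      moreover then have "t < n" using n by auto
      ultimately show ?thesis using that by auto
    qed
    have pt: "p t = 0 \<or> p t = k - 1" using allB[OF t(1,2)] unfolding B_def by auto
    have ps_le: "p s \<le> k - 1" "p t \<le> k - 1" using plt[OF sn] plt[OF t(1)] by auto
    have two: "psi k l s (psi k l s p) = p(l := k - 1 - p l, s := k - 1 - p s)"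
      unfolding psi_def using sl by (auto simp: fun_eq_iff)
    have o2: "psi k l s (psi k l s p) \<in> orbit k n p0"
      using orbit_psi[OF p0 k1 orbit_psi[OF p0 k1 pA l(1) sn] l(1) sn] sl by auto
    obtain q where qo: "q \<in> orbit k n p0" and qf: "q = p(l := k - 1 - p l)"
    proof (cases "p s = p t")
      case True
      define q where "q = psi k t s (psi k l s (psi k l s p))"
      have "q \<in> orbit k n p0" unfolding q_def using orbit_psi[OF p0 k1 o2 t(1) sn t(3)] .
      moreover have "q = p(l := k - 1 - p l)"
        unfolding q_def two unfolding psi_def using sl t True ps_le by (auto simp: fun_eq_iff)
      ultimately show ?thesis using that by blast
    next
      case False
      then have opp: "p s = k - 1 - p t" "p t = k - 1 - p s" using ps pt by auto
      define q where "q = psi k s t (psi k l s (psi k l s p))"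
      have "q \<in> orbit k n p0" unfolding q_def using orbit_psi[OF p0 k1 o2 sn t(1)] t(3) by auto
      moreover have "q = p(l := k - 1 - p l)"
        unfolding q_def two unfolding psi_def using sl t opp ps_le by (auto simp: fun_eq_iff)
      ultimately show ?thesis using that by blast
    qed
    have "q \<noteq> p" using qf ql_ne by (metis fun_upd_same)
    moreover have "B k n q = B k n p" unfolding B_def qf using ql_nb l(1) lB unfolding B_def by auto
    moreover have "\<forall>s\<in>B k n p. q s = p s" using qf lB by auto
    ultimately show ?thesis using qo by blast
  qed
qed


lemma positions_finite: "finite (positions k n)"
proof -
  have "finite {f. \<forall>x. (x \<in> {0..<n} \<longrightarrow> f x \<in> {0..<k}) \<and> (x \<notin> {0..<n} \<longrightarrow> f x = (0::nat))}"
    by (intro finite_set_of_finite_funs finite_atLeastLessThan)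
  moreover have "positions k n \<subseteq> {f. \<forall>x. (x \<in> {0..<n} \<longrightarrow> f x \<in> {0..<k}) \<and> (x \<notin> {0..<n} \<longrightarrow> f x = (0::nat))}"
    unfolding positions_def by (simp add: subset_iff not_less)
  ultimately show ?thesis by (rule finite_subset[rotated])
qed



theorem mainTheorem3:
  fixes k n m :: nat and A :: "(nat \<Rightarrow> nat) set"
  assumes "k \<ge> 2" and "n \<ge> 3"
    and "A \<in> conn_classes k n"
    and "\<forall>p\<in>A. card (B k n p) = m"
  shows "A = (\<Union>{Cl k n A S \<epsilon> | S \<epsilon>. admissible k n m S \<epsilon>})
    \<and> (\<forall>S \<epsilon> S' \<epsilon>'. admissible k n m S \<epsilon> \<and> admissible k n m S' \<epsilon>' \<and>
          Cl k n A S \<epsilon> \<inter> Cl k n A S' \<epsilon>' \<noteq> {} \<longrightarrow> S = S' \<and> (\<forall>s\<in>S. \<epsilon> s = \<epsilon>' s))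
    \<and> (\<forall>p\<in>A. \<forall>q\<in>A. coloring k n p = coloring k n q \<longleftrightarrow>
          (\<exists>S \<epsilon>. admissible k n m S \<epsilon> \<and> p \<in> Cl k n A S \<epsilon> \<and> q \<in> Cl k n A S \<epsilon>))
    \<and> (\<not> central k n A \<longrightarrow> (\<forall>S \<epsilon>. admissible k n m S \<epsilon> \<and> Cl k n A S \<epsilon> \<noteq> {}
          \<longrightarrow> finite (Cl k n A S \<epsilon>) \<and> card (Cl k n A S \<epsilon>) \<ge> 2))
    \<and> (central k n A \<longrightarrow> (\<forall>S \<epsilon>. admissible k n m S \<epsilon> \<and> Cl k n A S \<epsilon> \<noteq> {}
          \<longrightarrow> (\<exists>p. Cl k n A S \<epsilon> = {p})))"
proof -
  have k1: "k \<ge> 1" using assms(1) by simp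
  obtain p0 where p0: "A = orbit k n p0" "p0 \<in> positions k n" "external k n p0"
    using assms(3) unfolding conn_classes_def by blast
  have Apos: "A \<subseteq> positions k n" using orbit_pos[OF p0(2) k1] p0(1) by blast
  have p0A: "p0 \<in> A" using p0(1) orbit_self by blast
  have m1: "m \<ge> 1"
  proof -
    have "B k n p0 \<noteq> {}" using p0(3) unfolding external_def .
    moreover have "finite (B k n p0)" unfolding B_def by simp
    ultimately have "card (B k n p0) > 0" by (simp add: card_gt_0_iff)
    then show ?thesis using assms(4) p0A by simp
  qed
  have Bne: "B k n p \<noteq> {}" if "p \<in> A" for p
  proof
    assume "B k n p = {}"
    then have "card (B k n p) = 0" by simp
    then show False using assms(4) that m1 by simp
  qed
  have PcA: "Pc k n p = Pc k n p0" if "p \<in> A" for p using orbit_Pc[OF p0(2) k1] that p0(1) by blast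
  have adm: "admissible k n m (B k n p) p" if "p \<in> A" for p
    using assms(4) that unfolding admissible_def B_def by auto
  have pCl: "p \<in> Cl k n A (B k n p) p" if "p \<in> A" for p using that unfolding Cl_def by simp
  have ClA: "Cl k n A S \<epsilon> \<subseteq> A" for S \<epsilon> unfolding Cl_def by blast
  have part1: "A = (\<Union>{Cl k n A S \<epsilon> | S \<epsilon>. admissible k n m S \<epsilon>})"
  proof
    show "A \<subseteq> \<Union>{Cl k n A S \<epsilon> | S \<epsilon>. admissible k n m S \<epsilon>}"
      using adm pCl by blast
    show "\<Union>{Cl k n A S \<epsilon> | S \<epsilon>. admissible k n m S \<epsilon>} \<subseteq> A" using ClA by blast
  qed
  have part2: "\<forall>S \<epsilon> S' \<epsilon>'. admissible k n m S \<epsilon> \<and> admissible k n m S' \<epsilon>' \<and>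
          Cl k n A S \<epsilon> \<inter> Cl k n A S' \<epsilon>' \<noteq> {} \<longrightarrow> S = S' \<and> (\<forall>s\<in>S. \<epsilon> s = \<epsilon>' s)"
  proof (intro allI impI)
    fix S \<epsilon> S' \<epsilon>'
    assume "admissible k n m S \<epsilon> \<and> admissible k n m S' \<epsilon>' \<and> Cl k n A S \<epsilon> \<inter> Cl k n A S' \<epsilon>' \<noteq> {}"
    then obtain p where "p \<in> Cl k n A S \<epsilon>" "p \<in> Cl k n A S' \<epsilon>'" by blast
    then have "B k n p = S" "\<forall>s\<in>S. p s = \<epsilon> s" "B k n p = S'" "\<forall>s\<in>S'. p s = \<epsilon>' s"
      unfolding Cl_def by simp_all
    then show "S = S' \<and> (\<forall>s\<in>S. \<epsilon> s = \<epsilon>' s)" by simp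
  qed
  have part3: "\<forall>p\<in>A. \<forall>q\<in>A. coloring k n p = coloring k n q \<longleftrightarrow>
          (\<exists>S \<epsilon>. admissible k n m S \<epsilon> \<and> p \<in> Cl k n A S \<epsilon> \<and> q \<in> Cl k n A S \<epsilon>)"
  proof (intro ballI)
    fix p q assume p: "p \<in> A" and q: "q \<in> A"
    have "coloring k n p = coloring k n q \<longleftrightarrow> (B k n p = B k n q \<and> (\<forall>s\<in>B k n p. p s = q s))"
      using coloring_eq[of p k n q] Apos p q assms(1,2) by blast
    also have "\<dots> \<longleftrightarrow> (\<exists>S \<epsilon>. admissible k n m S \<epsilon> \<and> p \<in> Cl k n A S \<epsilon> \<and> q \<in> Cl k n A S \<epsilon>)"
    proof
      assume h: "B k n p = B k n q \<and> (\<forall>s\<in>B k n p. p s = q s)"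
      have "q \<in> Cl k n A (B k n p) p" using h q unfolding Cl_def by simp
      then show "\<exists>S \<epsilon>. admissible k n m S \<epsilon> \<and> p \<in> Cl k n A S \<epsilon> \<and> q \<in> Cl k n A S \<epsilon>"
        using adm[OF p] pCl[OF p] by blast
    next
      assume "\<exists>S \<epsilon>. admissible k n m S \<epsilon> \<and> p \<in> Cl k n A S \<epsilon> \<and> q \<in> Cl k n A S \<epsilon>"
      then show "B k n p = B k n q \<and> (\<forall>s\<in>B k n p. p s = q s)" unfolding Cl_def by auto
    qed
    finally show "coloring k n p = coloring k n q \<longleftrightarrow>
          (\<exists>S \<epsilon>. admissible k n m S \<epsilon> \<and> p \<in> Cl k n A S \<epsilon> \<and> q \<in> Cl k n A S \<epsilon>)" .
  qed
  have finA: "finite A" using Apos positions_finite finite_subset by blast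
  have part4: "\<not> central k n A \<longrightarrow> (\<forall>S \<epsilon>. admissible k n m S \<epsilon> \<and> Cl k n A S \<epsilon> \<noteq> {}
          \<longrightarrow> finite (Cl k n A S \<epsilon>) \<and> card (Cl k n A S \<epsilon>) \<ge> 2)"
  proof (intro impI allI)
    fix S \<epsilon>
    assume nc: "\<not> central k n A" and h: "admissible k n m S \<epsilon> \<and> Cl k n A S \<epsilon> \<noteq> {}"
    obtain p' where "p' \<in> A" "Pc k n p'" using nc central_iff[OF Apos] by blast
    then have P0: "Pc k n p0" using PcA by blast
    obtain p where p: "p \<in> Cl k n A S \<epsilon>" using h by blast
    have pA: "p \<in> A" using p ClA by blast
    have "Pc k n p" using PcA[OF pA] P0 by simp
    moreover have pO: "p \<in> orbit k n p0" using pA p0(1) by simp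
    ultimately obtain q where q: "q \<in> orbit k n p0" "q \<noteq> p" "B k n q = B k n p" "\<forall>s\<in>B k n p. q s = p s"
      using exists_other[OF p0(2) assms(1,2) pO Bne[OF pA]] by blast
    have qA: "q \<in> A" using q(1) p0(1) by simp
    have pc: "B k n p = S" "\<forall>s\<in>S. p s = \<epsilon> s" using p unfolding Cl_def by auto
    have "q \<in> Cl k n A S \<epsilon>" unfolding Cl_def using qA q(3,4) pc by simp
    have fin: "finite (Cl k n A S \<epsilon>)" using finA ClA finite_subset by blast
    have "card {p, q} \<le> card (Cl k n A S \<epsilon>)"
      using fin p \<open>q \<in> Cl k n A S \<epsilon>\<close> by (intro card_mono) auto
    then show "finite (Cl k n A S \<epsilon>) \<and> card (Cl k n A S \<epsilon>) \<ge> 2" using fin q(2) by auto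
  qed
  have part5: "central k n A \<longrightarrow> (\<forall>S \<epsilon>. admissible k n m S \<epsilon> \<and> Cl k n A S \<epsilon> \<noteq> {}
          \<longrightarrow> (\<exists>p. Cl k n A S \<epsilon> = {p}))"
  proof (intro impI allI)
    fix S \<epsilon>
    assume c: "central k n A" and h: "admissible k n m S \<epsilon> \<and> Cl k n A S \<epsilon> \<noteq> {}"
    have nP: "\<forall>p\<in>A. \<not> Pc k n p" using c central_iff[OF Apos] by blast
    obtain p where p: "p \<in> Cl k n A S \<epsilon>" using h by blast
    have "q = p" if q: "q \<in> Cl k n A S \<epsilon>" for q
    proof
      fix i
      have pA: "p \<in> A" and qA: "q \<in> A" using p q ClA by blast+
      have pp: "p \<in> positions k n" and qp: "q \<in> positions k n" using pA qA Apos by blast+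
      have BB: "B k n p = S" "B k n q = S" "\<forall>s\<in>S. p s = \<epsilon> s" "\<forall>s\<in>S. q s = \<epsilon> s"
        using p q unfolding Cl_def by auto
      show "q i = p i"
      proof (cases "i < n")
        case False
        then show ?thesis using pp qp unfolding positions_def by auto
      next
        case True
        show ?thesis
        proof (cases "i \<in> S")
          case True
          then show ?thesis using BB by simp
        next
          case False
          then have nb: "i \<notin> B k n p" "i \<notin> B k n q" using BB by auto
          have lt: "p i < k" "q i < k" using pp qp \<open>i < n\<close> unfolding positions_def by auto
          have "\<not> Pc k n p" "\<not> Pc k n q" using nP pA qA by auto
          then have "\<not> (0 < p i \<and> p i < k - 1 \<and> 2 * p i \<noteq> k - 1)"
                    "\<not> (0 < q i \<and> q i < k - 1 \<and> 2 * q i \<noteq> k - 1)"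
            using \<open>i < n\<close> unfolding Pc_def by blast+
          moreover have "p i \<noteq> 0" "p i \<noteq> k - 1" "q i \<noteq> 0" "q i \<noteq> k - 1"
            using nb \<open>i < n\<close> unfolding B_def by auto
          ultimately show ?thesis using lt by arith
        qed
      qed
    qed
    then show "\<exists>p. Cl k n A S \<epsilon> = {p}" using p by blast
  qed
  show ?thesis by (intro conjI part1 part2 part3 part4 part5)
qed

end
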